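(* Let $k\ge 2$, $N\ge 2$. For each $j\in\{0,\ldots,k-1\}$ the right eigenvector $v_j$ of $T$ for the eigenvalue $N^{-j}$ can be normalized by $v_j[0]=1$, and then $$\sum_{i=0}^{k-1}\binom{k-1}{i}v_j[i]\,x^i = (1+x)^{k-1-j}\,Q_j(x)$$ for a polynomial $Q_j$ of degree $j$ with $Q_j(0)=1$ and $x^jQ_j(1/x)=(-1)^jQ_j(x)$. Moreover $v_j[k-1-i]=(-1)^jv_j[i]$ for all $i$, $\sum_i u_m[i]v_j[i]=\delta_{mj}$ where $u_m$ are the left eigenvectors defined by $\sum_i u_m[i]x^i=\frac{(-1)^m|s(k,k-m)|}{k!}(x-1)^mA_{k-m}(x)$, and in particular $v_0=(1,\ldots,1)$, $v_1[i]=(k-1-2i)/(k-1)$, and $v_{k-1}[i]=(-1)^i/\binom{k-1}{i}$.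
   Context: $H[c,c'] = \#\{(d_1,\ldots,d_k)\in\{0,\ldots,N-1\}^k : \lfloor (d_1+\cdots+d_k+c)/N\rfloor = c'\}$ for $c,c'\in\{0,\ldots,k-1\}$ and $T=N^{-k}H$ (row-stochastic Holte matrix); its eigenvalues $N^{-j}$, $j=0,\ldots,k-1$, are simple. Right eigenvector: $Tv=\lambda v$. $A(n,i)$ is the Eulerian number (permutations of $\{1,\ldots,n\}$ with $i$ descents), $A_n(x)=\sum_{i=0}^{n-1}A(n,i)x^i$, and $|s(k,m)|$ is the coefficient of $x^m$ in $x(x+1)\cdots(x+k-1)$. *)

theory Defs
  imports Complex_Main "HOL-Computational_Algebra.Polynomial" "HOL-Combinatorics.Combinatorics"
begin

definition holte_H :: "nat \<Rightarrow> nat \<Rightarrow> nat \<Rightarrow> nat \<Rightarrow> nat" where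
  "holte_H N k c c' = card {d \<in> {0..<k} \<rightarrow>\<^sub>E {0..<N}. (sum d {0..<k} + c) div N = c'}"

definition holte_T :: "nat \<Rightarrow> nat \<Rightarrow> nat \<Rightarrow> nat \<Rightarrow> real" where
  "holte_T N k c c' = real (holte_H N k c c') / real N ^ k"

definition is_right_eigvec :: "nat \<Rightarrow> nat \<Rightarrow> real \<Rightarrow> (nat \<Rightarrow> real) \<Rightarrow> bool" where
  "is_right_eigvec N k lam v \<longleftrightarrow>
     (\<forall>c<k. (\<Sum>c'<k. holte_T N k c c' * v c') = lam * v c)"

definition eulerian :: "nat \<Rightarrow> nat \<Rightarrow> nat" where
  "eulerian n i = card {p. p permutes {1..n} \<and> card {j \<in> {1..<n}. p j > p (Suc j)} = i}"

definition eulerian_poly :: "nat \<Rightarrow> real poly" where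
  "eulerian_poly n = (\<Sum>i<n. monom (real (eulerian n i)) i)"

(* left eigenvector u_m: sum_i u_m[i] x^i = (-1)^m |s(k,k-m)| / k! (x-1)^m A_{k-m}(x);
   |s(k,m)| is the unsigned Stirling number of the first kind (library: stirling) *)
definition left_u :: "nat \<Rightarrow> nat \<Rightarrow> nat \<Rightarrow> real" where
  "left_u k m i = coeff (smult ((-1) ^ m * real (stirling k (k - m)) / fact k)
                          ([:-1, 1:] ^ m * eulerian_poly (k - m))) i"

end

theory Submission
  imports Defs "HOL-Computational_Algebra.Formal_Power_Series" "Jordan_Normal_Form.Determinant"
begin

lemma sum_PiE_Suc:
  fixes F :: "nat \<Rightarrow> 'b::comm_monoid_add"
  shows "(\<Sum>d\<in>{0..<Suc k} \<rightarrow>\<^sub>E {0..<N}. F (sum d {0..<Suc k}))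
       = (\<Sum>y<N. \<Sum>g\<in>{0..<k} \<rightarrow>\<^sub>E {0..<N}. F (y + sum g {0..<k}))"
proof -
  have eq: "{0..<Suc k} = insert k {0..<k}" by auto
  have "(\<Sum>d\<in>{0..<Suc k} \<rightarrow>\<^sub>E {0..<N}. F (sum d {0..<Suc k}))
      = (\<Sum>d\<in>(\<lambda>(y, g). g(k := y)) ` ({0..<N} \<times> ({0..<k} \<rightarrow>\<^sub>E {0..<N})). F (sum d {0..<Suc k}))"
    unfolding eq PiE_insert_eq by simp
  also have "\<dots> = (\<Sum>p\<in>{0..<N} \<times> ({0..<k} \<rightarrow>\<^sub>E {0..<N}). F (sum ((\<lambda>(y, g). g(k := y)) p) {0..<Suc k}))"
    by (subst sum.reindex) (auto intro!: inj_combinator[of k "{0..<k}" "\<lambda>_. {0..<N}", simplified])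
  also have "\<dots> = (\<Sum>p\<in>{0..<N} \<times> ({0..<k} \<rightarrow>\<^sub>E {0..<N}). F (fst p + sum (snd p) {0..<k}))"
  proof (rule sum.cong[OF refl])
    fix p assume "p \<in> {0..<N} \<times> ({0..<k} \<rightarrow>\<^sub>E {0..<N})"
    obtain y g where p: "p = (y, g)" by (cases p)
    have "sum (g(k := y)) {0..<Suc k} = y + sum (g(k := y)) {0..<k}"
      by (simp add: add.commute)
    also have "sum (g(k := y)) {0..<k} = sum g {0..<k}" by (rule sum.cong) auto
    finally show "F (sum ((\<lambda>(y, g). g(k := y)) p) {0..<Suc k}) = F (fst p + sum (snd p) {0..<k})"
      by (simp add: p add.commute)
  qed
  also have "\<dots> = (\<Sum>y\<in>{0..<N}. \<Sum>g\<in>{0..<k} \<rightarrow>\<^sub>E {0..<N}. F (y + sum g {0..<k}))"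
    unfolding sum.cartesian_product by (simp add: case_prod_beta)
  finally show ?thesis by (simp add: atLeast0LessThan)
qed

lemma PiE_sum_le:
  fixes d :: "nat \<Rightarrow> nat"
  assumes "d \<in> {0..<k} \<rightarrow>\<^sub>E {0..<N}"
  shows "sum d {0..<k} \<le> k * (N - 1)"
proof -
  have "\<forall>i\<in>{0..<k}. d i \<le> N - 1"
  proof
    fix i assume "i \<in> {0..<k}"
    hence "d i < N" using assms by (auto simp: PiE_def Pi_def)
    thus "d i \<le> N - 1" by linarith
  qed
  hence "sum d {0..<k} \<le> sum (\<lambda>_. N - 1) {0..<k}"
    using sum_mono[of "{0..<k}" d "\<lambda>_. N - 1"] by blast
  thus ?thesis by simp
qed

lemma telescope_N:
  fixes f :: "nat \<Rightarrow> nat"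
  shows "(\<Sum>y<N. f (Suc (M + y))) + f M = (\<Sum>y<N. f (M + y)) + f (M + N)"
  by (induction N) auto

lemma star_identity:
  assumes N: "N \<ge> 1"
  shows "(\<Sum>d\<in>{0..<k} \<rightarrow>\<^sub>E {0..<N}. ((M + sum d {0..<k}) div N) choose k) = M choose k"
proof (induction k arbitrary: M)
  case 0
  then show ?case by simp
next
  case (Suc k)
  define F where "F M = (\<Sum>d\<in>{0..<Suc k} \<rightarrow>\<^sub>E {0..<N}. ((M + sum d {0..<Suc k}) div N) choose Suc k)" for M
  have Fsplit: "F M = (\<Sum>g\<in>{0..<k} \<rightarrow>\<^sub>E {0..<N}. \<Sum>y<N. ((M + y + sum g {0..<k}) div N) choose Suc k)" for M
    unfolding F_def
    by (subst sum_PiE_Suc[where F = "\<lambda>s. ((M + s) div N) choose Suc k"], subst sum.swap) (simp add: add.assoc)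
  have step: "F (Suc M) = F M + (M choose k)" for M
  proof -
    have inner: "(\<Sum>y<N. ((Suc M + y + S) div N) choose Suc k)
        = (\<Sum>y<N. ((M + y + S) div N) choose Suc k) + (((M + S) div N) choose k)" for S
    proof -
      define f where "f x = ((x + S) div N) choose Suc k" for x
      have "(M + N + S) div N = Suc ((M + S) div N)"
      proof -
      have "(M + N + S) div N = ((M + S) + N) div N" by (simp add: add_ac)
      also have "\<dots> = Suc ((M + S) div N)" using N by simp
      finally show ?thesis .
    qed
      hence fMN: "f (M + N) = f M + (((M + S) div N) choose k)"
        unfolding f_def by simp
      have "(\<Sum>y<N. f (Suc (M + y))) + f M = (\<Sum>y<N. f (M + y)) + f (M + N)"
        by (rule telescope_N)
      thus ?thesis unfolding f_def fMN[unfolded f_def] by simp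
    qed
    have "F (Suc M) = (\<Sum>g\<in>{0..<k} \<rightarrow>\<^sub>E {0..<N}. (\<Sum>y<N. ((M + y + sum g {0..<k}) div N) choose Suc k)
                 + (((M + sum g {0..<k}) div N) choose k))"
      unfolding Fsplit by (rule sum.cong[OF refl]) (rule inner)
    also have "\<dots> = F M + (M choose k)"
      by (simp add: sum.distrib Fsplit Suc.IH)
    finally show ?thesis .
  qed
  have F0: "F 0 = 0"
    unfolding F_def
  proof (rule sum.neutral, rule ballI)
    fix d assume d: "d \<in> {0..<Suc k} \<rightarrow>\<^sub>E {0..<N}"
    have "sum d {0..<Suc k} \<le> Suc k * (N - 1)" by (rule PiE_sum_le[OF d])
    also have "\<dots> < Suc k * N" using N by (intro mult_strict_left_mono) auto
    finally have "sum d {0..<Suc k} div N < Suc k"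
      by (intro less_mult_imp_div_less)
    thus "((0 + sum d {0..<Suc k}) div N) choose Suc k = 0" by simp
  qed
  have "F M = M choose Suc k" for M
  proof (induction M)
    case 0 thus ?case by (simp add: F0)
  next
    case (Suc M) thus ?case by (simp add: step)
  qed
  thus ?case unfolding F_def .
qed

lemma holte_fiber:
  assumes N: "N \<ge> 1" and c: "c < k"
  shows "(\<Sum>q<k. real (holte_H N k c q) * g q)
       = (\<Sum>d\<in>{0..<k} \<rightarrow>\<^sub>E {0..<N}. g ((sum d {0..<k} + c) div N))"
proof -
  let ?A = "{0..<k} \<rightarrow>\<^sub>E {0..<N}"
  let ?f = "\<lambda>d. (sum d {0..<k} + c) div N"
  have fin: "finite ?A" by (simp add: finite_PiE)
  have img: "?f ` ?A \<subseteq> {..<k}"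
  proof
    fix x assume "x \<in> ?f ` ?A"
    then obtain d where d: "d \<in> ?A" and x: "x = ?f d" by auto
    have "sum d {0..<k} + c \<le> k * (N - 1) + (k - 1)" using PiE_sum_le[OF d] c by simp
    also have "\<dots> < k * N" using N c
      by (cases N) (auto simp: algebra_simps)
    finally show "x \<in> {..<k}" using x N
      by (simp add: div_less_iff_less_mult mult.commute)
  qed
  have "(\<Sum>q<k. real (holte_H N k c q) * g q) = (\<Sum>q<k. \<Sum>d\<in>{d\<in>?A. ?f d = q}. g (?f d))"
  proof (rule sum.cong[OF refl])
    fix q assume "q \<in> {..<k}"
    have "(\<Sum>d\<in>{d\<in>?A. ?f d = q}. g (?f d)) = (\<Sum>d\<in>{d\<in>?A. ?f d = q}. g q)"
      by (rule sum.cong) auto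
    also have "\<dots> = real (card {d\<in>?A. ?f d = q}) * g q" by simp
    finally show "real (holte_H N k c q) * g q = (\<Sum>d\<in>{d\<in>?A. ?f d = q}. g (?f d))"
      by (simp add: holte_H_def)
  qed
  also have "\<dots> = (\<Sum>d\<in>?A. g (?f d))"
    using sum.group[OF fin _ img, of "\<lambda>d. g (?f d)"] by simp
  finally show ?thesis .
qed

fun desR :: "nat list \<Rightarrow> nat" where
  "desR [] = 0"
| "desR [x] = 0"
| "desR (x # y # zs) = (if y < x then 1 else 0) + desR (y # zs)"

lemma desR_Cons: "desR (x # zs) = (if zs \<noteq> [] \<and> hd zs < x then 1 else 0) + desR zs"
  by (cases zs) auto

definition insL :: "nat \<Rightarrow> nat \<Rightarrow> nat list \<Rightarrow> nat list" where
  "insL p M ys = take p ys @ M # drop p ys"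

fun incr :: "nat \<Rightarrow> nat list \<Rightarrow> nat" where
  "incr 0 ys = (if ys = [] then 0 else 1)"
| "incr (Suc 0) (x # ys) = (if ys \<noteq> [] \<and> \<not> hd ys < x then 1 else 0)"
| "incr (Suc (Suc p)) (x # ys) = incr (Suc p) ys"
| "incr (Suc p) [] = 0"

lemma incr_le1: "incr p ys \<le> 1"
  by (induction p ys rule: incr.induct) auto

lemma insL_Suc: "insL (Suc p) M (x # ys) = x # insL p M ys"
  by (simp add: insL_def)

lemma insL_0: "insL 0 M ys = M # ys"
  by (simp add: insL_def)

lemma hd_insL: "0 < p \<Longrightarrow> ys \<noteq> [] \<Longrightarrow> hd (insL p M ys) = hd ys"
  by (cases ys; cases p) (auto simp: insL_def)

lemma desR_insL:
  assumes "\<forall>z\<in>set ys. z < M" and "p \<le> length ys"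
  shows "desR (insL p M ys) = desR ys + incr p ys"
  using assms
proof (induction ys arbitrary: p)
  case Nil
  then show ?case by (simp add: insL_def)
next
  case (Cons x ys)
  show ?case
  proof (cases p)
    case 0
    then show ?thesis using Cons.prems by (simp add: insL_0)
  next
    case (Suc p')
    have IH: "desR (insL p' M ys) = desR ys + incr p' ys"
      using Cons by (simp add: Suc)
    have ne: "insL p' M ys \<noteq> []" by (simp add: insL_def)
    have "desR (insL p M (x # ys)) = (if hd (insL p' M ys) < x then 1 else 0) + desR (insL p' M ys)"
      using ne by (simp add: Suc insL_Suc desR_Cons)
    also have "\<dots> = desR (x # ys) + incr p (x # ys)"
    proof (cases p')
      case 0
      have "\<not> M < x" using Cons.prems by auto
      then show ?thesis using IH by (simp add: Suc 0 insL_0 desR_Cons)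
    next
      case (Suc p'')
      have ysne: "ys \<noteq> []" using Cons.prems \<open>p = Suc p'\<close> Suc by auto
      have "hd (insL p' M ys) = hd ys" using hd_insL[OF _ ysne] Suc by simp
      then show ?thesis using IH ysne by (simp add: \<open>p = Suc p'\<close> Suc desR_Cons)
    qed
    finally show ?thesis .
  qed
qed

lemma sum_incr: "(\<Sum>p\<le>length ys. incr p ys) + desR ys = length ys"
proof (induction ys)
  case Nil
  then show ?case by simp
next
  case (Cons x ys)
  show ?case
  proof (cases ys)
    case Nil
    then show ?thesis by simp
  next
    case (Cons y ys')
    have A: "(\<Sum>p\<le>length (x # ys). incr p (x # ys))
        = 1 + (if \<not> y < x then 1 else 0) + (\<Sum>p\<le>length ys'. incr (Suc p) ys)"
      by (simp add: Cons sum.atMost_Suc_shift del: sum.atMost_Suc)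
    have B: "(\<Sum>p\<le>length ys. incr p ys) = 1 + (\<Sum>p\<le>length ys'. incr (Suc p) ys)"
      by (simp add: Cons sum.atMost_Suc_shift del: sum.atMost_Suc)
    have C: "desR (x # ys) = (if y < x then 1 else 0) + desR ys" by (simp add: Cons)
    show ?thesis using Cons.IH A B C by (simp add: Cons)
  qed
qed

abbreviation PL :: "nat \<Rightarrow> nat list set" where
  "PL n \<equiv> permutations_of_set {1..n}"

lemma PL_Suc_image:
  "PL (Suc n) = (\<lambda>(ys, p). insL p (Suc n) ys) ` (PL n \<times> {..n})"
proof (rule Set.set_eqI, rule HOL.iffI)
  fix zs assume zs: "zs \<in> PL (Suc n)"
  hence "Suc n \<in> set zs" by (simp add: permutations_of_set_def)
  then obtain a b where ab: "zs = a @ Suc n # b" by (metis split_list)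
  have dz: "distinct zs" and sz: "set zs = {1..Suc n}" using zs by (auto simp: permutations_of_set_def)
  have "a @ b \<in> PL n"
  proof -
    have "distinct (a @ b)" using dz ab by auto
    moreover have "set (a @ b) = {1..n}"
    proof -
      have "Suc n \<notin> set a" "Suc n \<notin> set b" using dz ab by auto
      hence "set (a @ b) = set zs - {Suc n}" using ab by auto
      also have "\<dots> = {1..Suc n} - {Suc n}" using sz by simp
      also have "\<dots> = {1..n}" by auto
      finally show ?thesis .
    qed
    ultimately show ?thesis by (simp add: permutations_of_set_def)
  qed
  moreover have "length a \<le> n"
  proof -
    have "length zs = Suc n" using dz sz distinct_card by fastforce
    thus ?thesis using ab by simp
  qed
  moreover have "zs = insL (length a) (Suc n) (a @ b)" using ab by (simp add: insL_def)
  ultimately show "zs \<in> (\<lambda>(ys, p). insL p (Suc n) ys) ` (PL n \<times> {..n})"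
    by (auto intro!: image_eqI[where x = "(a @ b, length a)"])
next
  fix zs assume "zs \<in> (\<lambda>(ys, p). insL p (Suc n) ys) ` (PL n \<times> {..n})"
  then obtain ys p where ys: "ys \<in> PL n" and p: "p \<le> n" and zs: "zs = insL p (Suc n) ys" by auto
  have dy: "distinct ys" and sy: "set ys = {1..n}" using ys by (auto simp: permutations_of_set_def)
  have "set zs = insert (Suc n) (set (take p ys) \<union> set (drop p ys))"
    unfolding zs insL_def by auto
  also have "set (take p ys) \<union> set (drop p ys) = set ys"
    by (metis set_append append_take_drop_id)
  finally have "set zs = insert (Suc n) (set ys)" .
  hence "set zs = {1..Suc n}" using sy by auto
  moreover have "distinct zs"
  proof -
    have "Suc n \<notin> set ys" using sy by auto
    hence nin: "Suc n \<notin> set (take p ys)" "Suc n \<notin> set (drop p ys)"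
      by (auto dest: in_set_takeD in_set_dropD)
    have "distinct (take p ys @ drop p ys)" using dy by simp
    hence "distinct (take p ys @ Suc n # drop p ys)"
      using nin by (simp only: distinct_append distinct.simps(2) set_simps) blast
    thus ?thesis by (simp add: zs insL_def)
  qed
  ultimately show "zs \<in> PL (Suc n)" by (simp add: permutations_of_set_def)
qed

lemma PL_Suc_inj:
  "inj_on (\<lambda>(ys, p). insL p (Suc n) ys) (PL n \<times> {..n})"
proof (rule inj_onI)
  fix u v assume u: "u \<in> PL n \<times> {..n}" and v: "v \<in> PL n \<times> {..n}"
    and eq: "(\<lambda>(ys, p). insL p (Suc n) ys) u = (\<lambda>(ys, p). insL p (Suc n) ys) v"
  obtain ys p where up: "u = (ys, p)" by (cases u)
  obtain ys' p' where vp: "v = (ys', p')" by (cases v)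
  have sy: "set ys = {1..n}" "set ys' = {1..n}" using u v up vp by (auto simp: permutations_of_set_def)
  have ly: "length ys = n" "length ys' = n" using u v up vp
    by (auto simp: permutations_of_set_def dest!: distinct_card)
  have nin: "Suc n \<notin> set (take p ys)" "Suc n \<notin> set (drop p ys)"
    using sy by (auto dest: in_set_takeD in_set_dropD)
  have "take p ys @ Suc n # drop p ys = take p' ys' @ Suc n # drop p' ys'"
    using eq up vp by (simp add: insL_def)
  hence tt: "take p ys = take p' ys'" and dd: "drop p ys = drop p' ys'"
    using append_Cons_eq_iff[OF nin] by auto
  have "p = p'" using tt u v up vp ly by (metis length_take min.absorb2 atMost_iff mem_Sigma_iff)
  moreover have "ys = ys'" using tt dd by (metis append_take_drop_id)
  ultimately show "u = v" using up vp by simp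
qed

lemma worpitzky_list:
  fixes y :: real
  shows "(\<Sum>xs\<in>PL n. (y + real (desR xs)) gchoose n) = y ^ n"
proof (induction n)
  case 0
  then show ?case by simp
next
  case (Suc n)
  have "(\<Sum>zs\<in>PL (Suc n). (y + real (desR zs)) gchoose Suc n)
      = (\<Sum>u\<in>PL n \<times> {..n}. (y + real (desR ((\<lambda>(ys, p). insL p (Suc n) ys) u))) gchoose Suc n)"
    by (subst PL_Suc_image, subst sum.reindex[OF PL_Suc_inj]) simp
  also have "\<dots> = (\<Sum>ys\<in>PL n. \<Sum>p\<le>n. (y + real (desR (insL p (Suc n) ys))) gchoose Suc n)"
    unfolding sum.cartesian_product by (simp add: case_prod_beta)
  also have "\<dots> = (\<Sum>ys\<in>PL n. y * ((y + real (desR ys)) gchoose n))"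
  proof (rule sum.cong[OF refl])
    fix ys assume ys: "ys \<in> PL n"
    have sy: "set ys = {1..n}" using ys by (auto simp: permutations_of_set_def)
    have ly: "length ys = n" using ys by (auto simp: permutations_of_set_def dest!: distinct_card)
    have lt: "\<forall>z\<in>set ys. z < Suc n" using sy by auto
    define a where "a = y + real (desR ys)"
    have each: "(y + real (desR (insL p (Suc n) ys))) gchoose Suc n
          = (a gchoose Suc n) + real (incr p ys) * (a gchoose n)" if "p \<le> n" for p
    proof -
      have d: "desR (insL p (Suc n) ys) = desR ys + incr p ys"
        using desR_insL[OF lt] that ly by simp
      have "incr p ys = 0 \<or> incr p ys = 1" using incr_le1[of p ys] by linarith
      thus ?thesis
      proof
        assume "incr p ys = 0" thus ?thesis using d by (simp add: a_def)
      next
        assume i1: "incr p ys = 1"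
        have e: "y + real (desR (insL p (Suc n) ys)) = a + 1" using d i1 by (simp add: a_def)
        show ?thesis unfolding e using gbinomial_Suc_Suc[of a n] i1 by simp
      qed
    qed
    have si: "(\<Sum>p\<le>n. real (incr p ys)) = real n - real (desR ys)"
    proof -
      have h: "(\<Sum>p\<le>n. incr p ys) + desR ys = n" using sum_incr[of ys] ly by simp
      hence "real (\<Sum>p\<le>n. incr p ys) + real (desR ys) = real n" by (metis of_nat_add)
      hence "(\<Sum>p\<le>n. real (incr p ys)) + real (desR ys) = real n" by simp
      thus ?thesis by linarith
    qed
    have "(\<Sum>p\<le>n. (y + real (desR (insL p (Suc n) ys))) gchoose Suc n)
        = (\<Sum>p\<le>n. (a gchoose Suc n) + real (incr p ys) * (a gchoose n))"
      by (rule sum.cong) (auto simp: each)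
    also have "\<dots> = real (Suc n) * (a gchoose Suc n) + (\<Sum>p\<le>n. real (incr p ys)) * (a gchoose n)"
      by (simp add: sum.distrib sum_distrib_right)
    also have "\<dots> = real (Suc n) * (a gchoose Suc n) + (real n - real (desR ys)) * (a gchoose n)"
      by (simp add: si)
    also have "\<dots> = (a - real (desR ys)) * (a gchoose n)"
    proof -
      have e1: "real (Suc n) * (a gchoose Suc n) = a * (a gchoose n) - real n * (a gchoose n)"
        using gbinomial_mult_1[of a n] by simp
      show ?thesis unfolding e1 by (simp add: algebra_simps)
    qed
    also have "\<dots> = y * (a gchoose n)" by (simp add: a_def)
    finally show "(\<Sum>p\<le>n. (y + real (desR (insL p (Suc n) ys))) gchoose Suc n) = y * ((y + real (desR ys)) gchoose n)"
      by (simp add: a_def)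
  qed
  also have "\<dots> = y * (\<Sum>ys\<in>PL n. (y + real (desR ys)) gchoose n)"
    by (rule sum_distrib_left[symmetric])
  also have "\<dots> = y * y ^ n" by (simp only: Suc.IH)
  finally show ?case by simp
qed

lemma card_Suc_split:
  "card {j. j < Suc m \<and> Q j} = (if Q 0 then 1 else 0) + card {j. j < m \<and> Q (Suc j)}"
proof -
  have eq: "{j. j < Suc m \<and> Q j} = (if Q 0 then {0} else {}) \<union> Suc ` {j. j < m \<and> Q (Suc j)}"
    by (auto simp: less_Suc_eq_0_disj image_iff)
  have "card ((if Q 0 then {0} else {}) \<union> Suc ` {j. j < m \<and> Q (Suc j)})
      = card (if Q 0 then {0::nat} else {}) + card (Suc ` {j. j < m \<and> Q (Suc j)})"
    by (rule card_Un_disjoint) auto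
  also have "card (Suc ` {j. j < m \<and> Q (Suc j)}) = card {j. j < m \<and> Q (Suc j)}"
    by (rule card_image) simp
  finally show ?thesis unfolding eq by simp
qed

lemma desR_card: "desR xs = card {j. Suc j < length xs \<and> xs ! Suc j < xs ! j}"
proof (induction xs rule: desR.induct)
  case 1 thus ?case by simp
next
  case (2 x) thus ?case by simp
next
  case (3 x y zs)
  have "{j. Suc j < length (x # y # zs) \<and> (x # y # zs) ! Suc j < (x # y # zs) ! j}
      = {j. j < Suc (length zs) \<and> (x # y # zs) ! Suc j < (x # y # zs) ! j}" by auto
  also have "card \<dots> = (if y < x then 1 else 0) + card {j. j < length zs \<and> (y # zs) ! Suc j < (y # zs) ! j}"
    by (subst card_Suc_split) simp
  also have "{j. j < length zs \<and> (y # zs) ! Suc j < (y # zs) ! j} = {j. Suc j < length (y # zs) \<and> (y # zs) ! Suc j < (y # zs) ! j}"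
    by auto
  finally show ?case using "3.IH" by simp
qed

definition desP :: "nat \<Rightarrow> (nat \<Rightarrow> nat) \<Rightarrow> nat" where
  "desP n p = card {j \<in> {1..<n}. p j > p (Suc j)}"

lemma desP_desR: "desP n p = desR (map p [1..<Suc n])"
proof -
  have "desR (map p [1..<Suc n]) = card {j. Suc j < n \<and> p (Suc (Suc j)) < p (Suc j)}"
    unfolding desR_card by (rule arg_cong[where f = card]) (auto simp: nth_map_upt simp del: upt_Suc)
  also have "\<dots> = card (Suc ` {j. Suc j < n \<and> p (Suc (Suc j)) < p (Suc j)})"
    by (rule card_image[symmetric]) simp
  also have "Suc ` {j. Suc j < n \<and> p (Suc (Suc j)) < p (Suc j)} = {j \<in> {1..<n}. p j > p (Suc j)}"
  proof (rule Set.set_eqI, rule HOL.iffI)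
    fix x assume "x \<in> {j \<in> {1..<n}. p j > p (Suc j)}"
    then obtain j where "x = Suc j" "Suc j < n" "p (Suc (Suc j)) < p (Suc j)"
      by (cases x) auto
    thus "x \<in> Suc ` {j. Suc j < n \<and> p (Suc (Suc j)) < p (Suc j)}" by auto
  qed auto
  finally show ?thesis by (simp add: desP_def)
qed

lemma perm_to_list:
  "bij_betw (\<lambda>p. map p [1..<Suc n]) {p. p permutes {1..n}} (PL n)"
proof -
  let ?phi = "\<lambda>p. map p [1..<Suc n]"
  let ?S = "{p. p permutes {1..n}}"
  have inj: "inj_on ?phi ?S"
  proof (rule inj_onI)
    fix p q assume p: "p \<in> ?S" and q: "q \<in> ?S" and eq: "?phi p = ?phi q"
    have a: "\<forall>x\<in>{1..n}. p x = q x" using eq by (simp add: map_eq_conv del: upt_Suc)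
    show "p = q"
    proof
      fix x show "p x = q x"
      proof (cases "x \<in> {1..n}")
        case True thus ?thesis using a by blast
      next
        case False thus ?thesis using p q by (simp add: permutes_not_in)
      qed
    qed
  qed
  have sub: "?phi ` ?S \<subseteq> PL n"
  proof
    fix xs assume "xs \<in> ?phi ` ?S"
    then obtain p where p: "p permutes {1..n}" and xs: "xs = ?phi p" by auto
    have "set xs = p ` {1..n}" using xs by auto
    also have "\<dots> = {1..n}" by (rule permutes_image[OF p])
    finally have "set xs = {1..n}" .
    moreover have "distinct xs" unfolding xs
      by (simp only: distinct_map) (simp add: permutes_inj_on[OF p] del: upt_Suc)
    ultimately show "xs \<in> PL n" by (simp add: permutations_of_set_def)
  qed
  have "card (?phi ` ?S) = card ?S" by (rule card_image[OF inj])
  also have "\<dots> = fact n" by (rule card_permutations) auto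
  also have "\<dots> = card (PL n)" by simp
  finally have c: "card (?phi ` ?S) = card (PL n)" .
  have "?phi ` ?S = PL n" by (rule card_subset_eq[OF finite_permutations_of_set sub c])
  thus ?thesis using inj by (simp add: bij_betw_def)
qed

lemma eulerian_sum:
  assumes "n \<ge> 1"
  shows "(\<Sum>i<n. real (eulerian n i) * f i) = (\<Sum>xs\<in>PL n. f (desR xs))"
proof -
  let ?S = "{p. p permutes {1..n}}"
  have fin: "finite ?S" by (rule finite_permutations) simp
  have img: "desP n ` ?S \<subseteq> {..<n}"
  proof
    fix x assume "x \<in> desP n ` ?S"
    then obtain p where x: "x = desP n p" by auto
    have "desP n p \<le> card {1..<n}" unfolding desP_def by (rule card_mono) auto
    thus "x \<in> {..<n}" using x assms by simp
  qed
  have "(\<Sum>i<n. real (eulerian n i) * f i) = (\<Sum>i<n. \<Sum>p\<in>{p\<in>?S. desP n p = i}. f (desP n p))"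
  proof (rule sum.cong[OF refl])
    fix i assume "i \<in> {..<n}"
    have "(\<Sum>p\<in>{p\<in>?S. desP n p = i}. f (desP n p)) = (\<Sum>p\<in>{p\<in>?S. desP n p = i}. f i)"
      by (rule sum.cong) auto
    also have "\<dots> = real (card {p\<in>?S. desP n p = i}) * f i" by simp
    finally show "real (eulerian n i) * f i = (\<Sum>p\<in>{p\<in>?S. desP n p = i}. f (desP n p))"
      by (simp add: eulerian_def desP_def)
  qed
  also have "\<dots> = (\<Sum>p\<in>?S. f (desP n p))"
    using sum.group[OF fin _ img, of "\<lambda>p. f (desP n p)"] by simp
  also have "\<dots> = (\<Sum>p\<in>?S. f (desR (map p [1..<Suc n])))"
    by (simp add: desP_desR)
  also have "\<dots> = (\<Sum>xs\<in>PL n. f (desR xs))"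
    by (rule sum.reindex_bij_betw[OF perm_to_list])
  finally show ?thesis .
qed

theorem worpitzky:
  fixes y :: real
  assumes "n \<ge> 1"
  shows "(\<Sum>i<n. real (eulerian n i) * ((y + real i) gchoose n)) = y ^ n"
  using eulerian_sum[OF assms, of "\<lambda>i. (y + real i) gchoose n"] worpitzky_list[of y n] by simp

definition Bp :: "nat \<Rightarrow> nat \<Rightarrow> real poly" where
  "Bp k i = Polynomial.smult (1 / fact k) (\<Prod>t<k. [:real i - real t, 1:])"

definition vt :: "nat \<Rightarrow> nat \<Rightarrow> nat \<Rightarrow> real" where
  "vt k j i = coeff (Bp k i) (k - j)"

definition Pm :: "nat \<Rightarrow> nat \<Rightarrow> real poly" where
  "Pm k m = [:-1, 1:] ^ m * eulerian_poly (k - m)"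

lemma poly_Bp: "poly (Bp k i) y = (y + real i) gchoose k"
  by (simp add: Bp_def poly_prod gbinomial_prod_rev atLeast0LessThan algebra_simps)

lemma coeff_from_poly:
  fixes p :: "real poly"
  assumes "\<And>y. poly p y = (\<Sum>m\<le>K. a m * y ^ m)"
  shows "coeff p n = (if n \<le> K then a n else 0)"
proof -
  let ?q = "\<Sum>m\<le>K. monom (a m) m"
  have "poly p = poly ?q" by (rule ext) (simp add: assms poly_sum poly_monom)
  hence "p = ?q" by (simp add: poly_eq_poly_eq_iff)
  hence "coeff p n = (\<Sum>m\<le>K. if m = n then a m else 0)" by (simp add: coeff_sum)
  also have "\<dots> = (if n \<le> K then a n else 0)" by (simp add: sum.delta)
  finally show ?thesis .
qed

lemma coeff_neg:
  fixes p q :: "real poly"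
  assumes "\<And>y. poly p y = c * poly q (- y)"
  shows "coeff p n = c * (-1) ^ n * coeff q n"
proof -
  have "poly p y = (\<Sum>m\<le>degree q. (c * (-1) ^ m * coeff q m) * y ^ m)" for y
  proof -
    have "poly p y = c * poly q (- y)" by (rule assms)
    also have "poly q (- y) = (\<Sum>m\<le>degree q. coeff q m * (- y) ^ m)" by (rule poly_altdef)
    also have "c * (\<Sum>m\<le>degree q. coeff q m * (- y) ^ m) = (\<Sum>m\<le>degree q. (c * (-1) ^ m * coeff q m) * y ^ m)"
      by (simp add: sum_distrib_left power_minus[of y] mult_ac)
    finally show ?thesis .
  qed
  from coeff_from_poly[OF this] show ?thesis
    by (auto simp: coeff_eq_0)
qed

lemma coeff_Bp0:
  "coeff (Bp k 0) n = (if n \<le> k then (-1) ^ k * (-1) ^ n * real (stirling k n) / fact k else 0)"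
proof -
  have "poly (Bp k 0) y = (\<Sum>m\<le>k. ((-1) ^ k * (-1) ^ m * real (stirling k m) / fact k) * y ^ m)" for y
  proof -
    have "poly (Bp k 0) y = y gchoose k" by (simp add: poly_Bp)
    also have "\<dots> = (- 1) ^ k * pochhammer (- y) k / fact k" by (rule gbinomial_pochhammer)
    also have "pochhammer (- y) k = (\<Sum>m\<le>k. real (stirling k m) * (- y) ^ m)"
      by (rule stirling_pochhammer[symmetric])
    finally show ?thesis
      by (simp add: sum_divide_distrib sum_distrib_left power_minus[of y] mult_ac)
  qed
  from coeff_from_poly[OF this] show ?thesis .
qed

lemma neg1_pow_diff: "j \<le> k \<Longrightarrow> ((-1::real) ^ k) * (-1) ^ (k - j) = (-1) ^ j"
proof -
  assume "j \<le> k"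
  then obtain d where k: "k = j + d" by (metis le_add_diff_inverse)
  have "((-1::real) ^ k) * (-1) ^ (k - j) = (-1) ^ j * ((-1) ^ d * (-1) ^ d)"
    by (simp add: k power_add)
  also have "(-1::real) ^ d * (-1) ^ d = 1" by (simp add: power_add[symmetric] flip: mult_2)
  finally show ?thesis by simp
qed

lemma vt0: "j \<le> k \<Longrightarrow> vt k j 0 = (-1) ^ j * real (stirling k (k - j)) / fact k"
  by (simp add: vt_def coeff_Bp0 neg1_pow_diff)

lemma stirling_pos: "0 < m \<Longrightarrow> m \<le> n \<Longrightarrow> 0 < stirling n m"
proof (induction n arbitrary: m)
  case 0 thus ?case by simp
next
  case (Suc n)
  then obtain m' where m: "m = Suc m'" by (cases m) auto
  show ?case
  proof (cases m')
    case 0 thus ?thesis by (simp only: m 0 stirling_Suc_n_1) simp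
  next
    case (Suc m'')
    have "0 < stirling n m'" using Suc.IH[of m'] Suc.prems m Suc by simp
    thus ?thesis by (simp add: m)
  qed
qed

lemma vt0_nz: "j < k \<Longrightarrow> vt k j 0 \<noteq> 0"
  using stirling_pos[of "k - j" k] by (simp add: vt0)

lemma coeff_Bp_sym:
  assumes "i < k"
  shows "coeff (Bp k (k - 1 - i)) n = (-1) ^ k * (-1) ^ n * coeff (Bp k i) n"
proof -
  have "poly (Bp k (k - 1 - i)) y = (-1) ^ k * poly (Bp k i) (- y)" for y
  proof -
    have r: "real (k - 1 - i) = real k - 1 - real i" using assms by (simp add: of_nat_diff)
    have r': "real (k - Suc i) = real k - 1 - real i" using assms by (simp add: of_nat_diff)
    have "poly (Bp k (k - 1 - i)) y = (y + real (k - 1 - i)) gchoose k" by (simp add: poly_Bp)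
    also have "\<dots> = (-1) ^ k * ((real k - (y + real (k - 1 - i)) - 1) gchoose k)"
      by (rule gbinomial_negated_upper)
    also have "real k - (y + real (k - 1 - i)) - 1 = - y + real i" by (simp add: r r')
    finally show ?thesis by (simp add: poly_Bp)
  qed
  from coeff_neg[OF this] show ?thesis .
qed

lemma vt_sym:
  assumes i: "i < k" and j: "j \<le> k"
  shows "vt k j (k - 1 - i) = (-1) ^ j * vt k j i"
proof -
  show ?thesis unfolding vt_def by (simp only: coeff_Bp_sym[OF i] neg1_pow_diff[OF j])
qed

definition ee :: "nat \<Rightarrow> nat \<Rightarrow> nat \<Rightarrow> real" where
  "ee k j r = coeff (Bp (k - r) 0) (k - j)"

lemma vt_expand:
  assumes "j \<le> k"
  shows "vt k j i = (\<Sum>r\<le>j. real (i choose r) * ee k j r)"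
proof -
  have "poly (Bp k i) y = poly (\<Sum>r\<le>k. Polynomial.smult (real (i choose r)) (Bp (k - r) 0)) y" for y
  proof -
    have "poly (Bp k i) y = (real i + y) gchoose k" by (simp add: poly_Bp add.commute)
    also have "\<dots> = (\<Sum>r=0..k. (real i gchoose r) * (y gchoose (k - r)))"
      by (rule gbinomial_Vandermonde[symmetric])
    also have "\<dots> = (\<Sum>r\<le>k. real (i choose r) * poly (Bp (k - r) 0) y)"
      by (simp add: poly_Bp binomial_gbinomial atLeast0AtMost)
    finally show ?thesis by (simp add: poly_sum)
  qed
  hence "Bp k i = (\<Sum>r\<le>k. Polynomial.smult (real (i choose r)) (Bp (k - r) 0))"
    by (simp add: poly_eq_poly_eq_iff[symmetric] fun_eq_iff)
  hence "vt k j i = (\<Sum>r\<le>k. real (i choose r) * ee k j r)"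
    by (simp add: vt_def ee_def coeff_sum)
  also have "\<dots> = (\<Sum>r\<le>j. real (i choose r) * ee k j r)"
  proof (rule sum.mono_neutral_right)
    show "\<forall>r\<in>{..k} - {..j}. real (i choose r) * ee k j r = 0"
      using assms by (auto simp: ee_def coeff_Bp0)
  qed (use assms in auto)
  finally show ?thesis .
qed

lemma binom_sum_choose:
  fixes x :: real
  assumes "r \<le> n"
  shows "(\<Sum>i\<le>n. real (n choose i) * real (i choose r) * x ^ i) = real (n choose r) * x ^ r * (1 + x) ^ (n - r)"
proof -
  have "(\<Sum>i\<le>n. real (n choose i) * real (i choose r) * x ^ i)
      = (\<Sum>i\<in>{r..n}. real (n choose i) * real (i choose r) * x ^ i)"
    by (rule sum.mono_neutral_right) auto
  also have "\<dots> = (\<Sum>s\<in>{0..n-r}. real (n choose (s + r)) * real ((s + r) choose r) * x ^ (s + r))"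
  proof -
    have "{r..n} = {0 + r..(n - r) + r}" using assms by simp
    thus ?thesis by (simp only: sum.shift_bounds_cl_nat_ivl)
  qed
  also have "\<dots> = (\<Sum>s\<in>{0..n-r}. real (n choose r) * x ^ r * (real ((n - r) choose s) * x ^ s * 1 ^ (n - r - s)))"
  proof (rule sum.cong[OF refl])
    fix s assume s: "s \<in> {0..n-r}"
    have "(n choose (s + r)) * ((s + r) choose r) = (n choose r) * ((n - r) choose (s + r - r))"
      by (rule choose_mult) (use s assms in auto)
    hence "real (n choose (s + r)) * real ((s + r) choose r) = real (n choose r) * real ((n - r) choose s)"
      by (metis add_diff_cancel_right' of_nat_mult)
    thus "real (n choose (s + r)) * real ((s + r) choose r) * x ^ (s + r)
        = real (n choose r) * x ^ r * (real ((n - r) choose s) * x ^ s * 1 ^ (n - r - s))"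
      by (simp add: power_add algebra_simps)
  qed
  also have "\<dots> = real (n choose r) * x ^ r * (x + 1) ^ (n - r)"
    by (simp add: binomial_ring sum_distrib_left atLeast0AtMost)
  finally show ?thesis by (simp add: add.commute)
qed

lemma shift_sum:
  fixes Q :: "real poly"
  assumes "coeff Q K = 0"
  shows "(\<Sum>c<Suc K. coeff ([:-1, 1:] * Q) c * g c) = (\<Sum>c<K. coeff Q c * (g (Suc c) - g c))"
proof -
  have e: "[:-1, 1:] * Q = pCons 0 Q - Q" by simp
  have "(\<Sum>c<Suc K. coeff ([:-1, 1:] * Q) c * g c)
      = (\<Sum>c<Suc K. coeff (pCons 0 Q) c * g c) - (\<Sum>c<Suc K. coeff Q c * g c)"
    unfolding e by (simp add: left_diff_distrib sum_subtractf)
  also have "(\<Sum>c<Suc K. coeff (pCons 0 Q) c * g c) = (\<Sum>c<K. coeff Q c * g (Suc c))"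
    by (subst sum.lessThan_Suc_shift) simp
  also have "(\<Sum>c<Suc K. coeff Q c * g c) = (\<Sum>c<K. coeff Q c * g c)"
    using assms by simp
  finally show ?thesis by (simp add: right_diff_distrib sum_subtractf)
qed

lemma coeff_eulerian_poly: "coeff (eulerian_poly n) c = (if c < n then real (eulerian n c) else 0)"
  by (simp add: eulerian_poly_def coeff_sum)

lemma worpitzky_shift:
  fixes y :: real
  assumes n: "n \<ge> 1"
  shows "(\<Sum>c<n + m. coeff ([:-1, 1:] ^ m * eulerian_poly n) c * ((y + real c) gchoose (n + m))) = y ^ n"
proof (induction m)
  case 0
  have "(\<Sum>c<n. coeff (eulerian_poly n) c * ((y + real c) gchoose n))
      = (\<Sum>c<n. real (eulerian n c) * ((y + real c) gchoose n))"
    by (rule sum.cong) (auto simp: coeff_eulerian_poly)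
  also have "\<dots> = y ^ n" by (rule worpitzky[OF n])
  finally show ?case by simp
next
  case (Suc m)
  let ?Q = "[:-1, 1:] ^ m * eulerian_poly n"
  have dQ: "degree ?Q \<le> m + (n - 1)"
  proof -
    have "degree (eulerian_poly n) \<le> n - 1"
      by (rule degree_le) (auto simp: coeff_eulerian_poly)
    moreover have "degree ([:-1, 1::real:] ^ m) \<le> m"
      using degree_power_le[of "[:-1, 1::real:]" m] by simp
    ultimately show ?thesis
      using degree_mult_le[of "[:-1, 1::real:] ^ m" "eulerian_poly n"] by linarith
  qed
  have cQ: "coeff ?Q (n + m) = 0"
    by (rule coeff_eq_0) (use dQ n in linarith)
  have "[:-1, 1:] ^ Suc m * eulerian_poly n = [:-1, 1:] * ?Q"
    by (simp only: power_Suc mult.assoc)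
  hence "(\<Sum>c<n + Suc m. coeff ([:-1, 1:] ^ Suc m * eulerian_poly n) c * ((y + real c) gchoose (n + Suc m)))
      = (\<Sum>c<Suc (n + m). coeff ([:-1, 1:] * ?Q) c * ((y + real c) gchoose Suc (n + m)))"
    by (simp only: add_Suc_right)
  also have "\<dots> = (\<Sum>c<n + m. coeff ?Q c * (((y + real (Suc c)) gchoose Suc (n + m)) - ((y + real c) gchoose Suc (n + m))))"
    by (rule shift_sum[OF cQ])
  also have "\<dots> = (\<Sum>c<n + m. coeff ?Q c * ((y + real c) gchoose (n + m)))"
  proof (rule sum.cong[OF refl])
    fix c
    have "(y + real (Suc c)) gchoose Suc (n + m) = ((y + real c) + 1) gchoose Suc (n + m)"
      by (simp add: add.assoc add.commute[of 1])
    also have "\<dots> = ((y + real c) gchoose (n + m)) + ((y + real c) gchoose Suc (n + m))"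
      by (rule gbinomial_Suc_Suc)
    finally show "coeff ?Q c * (((y + real (Suc c)) gchoose Suc (n + m)) - ((y + real c) gchoose Suc (n + m)))
        = coeff ?Q c * ((y + real c) gchoose (n + m))" by simp
  qed
  also have "\<dots> = y ^ n" by (rule Suc.IH)
  finally show ?case .
qed

lemma worpitzky_Pm:
  fixes y :: real
  assumes "m < k"
  shows "(\<Sum>c<k. coeff (Pm k m) c * ((y + real c) gchoose k)) = y ^ (k - m)"
  using worpitzky_shift[where n = "k - m" and y = y and m = m] assms by (simp add: Pm_def)

lemma biorth_core:
  assumes m: "m < k" and j: "j < k"
  shows "(\<Sum>c<k. coeff (Pm k m) c * vt k j c) = (if m = j then 1 else 0)"
proof -
  let ?R = "\<Sum>c<k. Polynomial.smult (coeff (Pm k m) c) (Bp k c)"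
  have "poly ?R y = poly (monom 1 (k - m)) y" for y
    using worpitzky_Pm[OF m, of y] by (simp add: poly_sum poly_Bp poly_monom)
  hence R: "?R = monom 1 (k - m)" by (simp add: poly_eq_poly_eq_iff[symmetric] fun_eq_iff)
  have "(\<Sum>c<k. coeff (Pm k m) c * vt k j c) = coeff ?R (k - j)"
    by (simp add: vt_def coeff_sum)
  also have "\<dots> = (if m = j then 1 else 0)" using m j by (auto simp: R)
  finally show ?thesis .
qed

definition vv :: "nat \<Rightarrow> nat \<Rightarrow> nat \<Rightarrow> real" where
  "vv k j i = vt k j i / vt k j 0"

definition alpha :: "nat \<Rightarrow> nat \<Rightarrow> real" where
  "alpha k m = (-1) ^ m * real (stirling k (k - m)) / fact k"

lemma left_u_Pm: "left_u k m i = alpha k m * coeff (Pm k m) i"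
  by (simp add: left_u_def Pm_def alpha_def)

lemma biorth:
  assumes m: "m < k" and j: "j < k"
  shows "(\<Sum>c<k. left_u k m c * vv k j c) = (if m = j then 1 else 0)"
proof -
  have "(\<Sum>c<k. left_u k m c * vv k j c) = alpha k m / vt k j 0 * (\<Sum>c<k. coeff (Pm k m) c * vt k j c)"
    by (simp add: left_u_Pm vv_def sum_distrib_left divide_inverse mult_ac)
  also have "\<dots> = alpha k m / vt k j 0 * (if m = j then 1 else 0)"
    by (simp add: biorth_core[OF m j])
  also have "\<dots> = (if m = j then 1 else 0)"
    using vt0_nz[OF j] vt0[of j k] j by (auto simp: alpha_def)
  finally show ?thesis .
qed

lemma transform_inj:
  fixes u :: "nat \<Rightarrow> real"
  assumes h: "\<And>a. (\<Sum>q<k. u q * real ((a + q) choose k)) = 0"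
  shows "q < k \<Longrightarrow> u q = 0"
proof -
  have "\<forall>q. k - b \<le> q \<and> q < k \<longrightarrow> u q = 0" if "b \<le> k" for b
    using that
  proof (induction b)
    case 0 thus ?case by auto
  next
    case (Suc b)
    let ?q0 = "k - Suc b"
    have IH: "\<forall>q. k - b \<le> q \<and> q < k \<longrightarrow> u q = 0" using Suc by simp
    have q0k: "?q0 < k" using Suc.prems by simp
    have "(\<Sum>q<k. u q * real ((Suc b + q) choose k)) = u ?q0 * real ((Suc b + ?q0) choose k)
          + (\<Sum>q\<in>{..<k} - {?q0}. u q * real ((Suc b + q) choose k))"
      using q0k by (subst sum.remove[of _ ?q0]) auto
    also have "(\<Sum>q\<in>{..<k} - {?q0}. u q * real ((Suc b + q) choose k)) = 0"
    proof (rule sum.neutral, rule ballI)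
      fix q assume q: "q \<in> {..<k} - {?q0}"
      show "u q * real ((Suc b + q) choose k) = 0"
      proof (cases "q < ?q0")
        case True
        hence "Suc b + q < k" using Suc.prems by linarith
        thus ?thesis by simp
      next
        case False
        hence "k - b \<le> q" "q < k" using q Suc.prems by auto
        thus ?thesis using IH by simp
      qed
    qed
    also have "Suc b + ?q0 = k" using Suc.prems by simp
    finally have "u ?q0 = 0" using h[of "Suc b"] by simp
    thus ?case using IH by (metis le_antisym not_less_eq_eq Suc_diff_Suc Suc.prems Suc_le_lessD)
  qed
  from this[of k] show "q < k \<Longrightarrow> u q = 0" by auto
qed

lemma left_core:
  assumes N: "N \<ge> 1" and m: "m < k" and q: "q < k"
  shows "(\<Sum>c<k. coeff (Pm k m) c * real (holte_H N k c q)) = real N ^ (k - m) * coeff (Pm k m) q"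
proof -
  let ?w = "\<lambda>q. (\<Sum>c<k. coeff (Pm k m) c * real (holte_H N k c q))"
  let ?u = "\<lambda>q. ?w q - real N ^ (k - m) * coeff (Pm k m) q"
  have "(\<Sum>q<k. ?u q * real ((a + q) choose k)) = 0" for a
  proof -
    have "(\<Sum>q<k. ?w q * real ((a + q) choose k))
        = (\<Sum>c<k. coeff (Pm k m) c * (\<Sum>q<k. real (holte_H N k c q) * real ((a + q) choose k)))"
      by (simp add: sum_distrib_left sum_distrib_right mult_ac) (rule sum.swap)
    also have "\<dots> = (\<Sum>c<k. coeff (Pm k m) c * real ((N * a + c) choose k))"
    proof (rule sum.cong[OF refl])
      fix c assume c: "c \<in> {..<k}"
      have "(\<Sum>q<k. real (holte_H N k c q) * real ((a + q) choose k))
          = (\<Sum>d\<in>{0..<k} \<rightarrow>\<^sub>E {0..<N}. real ((a + (sum d {0..<k} + c) div N) choose k))"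
        using holte_fiber[OF N, of c k "\<lambda>q. real ((a + q) choose k)"] c by simp
      also have "\<dots> = (\<Sum>d\<in>{0..<k} \<rightarrow>\<^sub>E {0..<N}. real (((N * a + c + sum d {0..<k}) div N) choose k))"
      proof (rule sum.cong[OF refl])
        fix d
        have "(N * a + c + sum d {0..<k}) div N = a + (sum d {0..<k} + c) div N"
        proof -
          have e: "N * a + c + sum d {0..<k} = (sum d {0..<k} + c) + N * a" by simp
          have nz: "N \<noteq> 0" using N by simp
          show ?thesis unfolding e using div_mult_self2[OF nz, of "sum d {0..<k} + c" a] by simp
        qed
        thus "real ((a + (sum d {0..<k} + c) div N) choose k) = real (((N * a + c + sum d {0..<k}) div N) choose k)"
          by simp
      qed
      also have "\<dots> = real ((N * a + c) choose k)"
        using star_identity[OF N, where k = k and M = "N * a + c"] by (simp flip: of_nat_sum)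
      finally show "coeff (Pm k m) c * (\<Sum>q<k. real (holte_H N k c q) * real ((a + q) choose k))
          = coeff (Pm k m) c * real ((N * a + c) choose k)" by simp
    qed
    also have "\<dots> = (\<Sum>c<k. coeff (Pm k m) c * ((real (N * a) + real c) gchoose k))"
      by (simp add: binomial_gbinomial)
    also have "\<dots> = real (N * a) ^ (k - m)" by (rule worpitzky_Pm[OF m])
    finally have W: "(\<Sum>q<k. ?w q * real ((a + q) choose k)) = real (N * a) ^ (k - m)" .
    have "(\<Sum>q<k. (real N ^ (k - m) * coeff (Pm k m) q) * real ((a + q) choose k))
        = real N ^ (k - m) * (\<Sum>q<k. coeff (Pm k m) q * ((real a + real q) gchoose k))"
      by (simp add: sum_distrib_left binomial_gbinomial mult_ac)
    also have "\<dots> = real N ^ (k - m) * real a ^ (k - m)" by (simp add: worpitzky_Pm[OF m])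
    finally have V: "(\<Sum>q<k. (real N ^ (k - m) * coeff (Pm k m) q) * real ((a + q) choose k))
        = real (N * a) ^ (k - m)" by (simp add: power_mult_distrib)
    show ?thesis using W V by (simp add: left_diff_distrib sum_subtractf)
  qed
  from transform_inj[OF this q] show ?thesis by simp
qed

lemma left_eigen:
  assumes N: "N \<ge> 1" and m: "m < k" and q: "q < k"
  shows "(\<Sum>c<k. left_u k m c * holte_T N k c q) = 1 / real N ^ m * left_u k m q"
proof -
  have "(\<Sum>c<k. left_u k m c * holte_T N k c q)
      = alpha k m / real N ^ k * (\<Sum>c<k. coeff (Pm k m) c * real (holte_H N k c q))"
    by (simp add: left_u_Pm holte_T_def sum_distrib_left mult_ac)
  also have "\<dots> = alpha k m / real N ^ k * (real N ^ (k - m) * coeff (Pm k m) q)"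
    by (simp add: left_core[OF N m q])
  also have "real N ^ k = real N ^ (k - m) * real N ^ m"
    using m by (simp add: power_add[symmetric])
  also have "alpha k m / (real N ^ (k - m) * real N ^ m) * (real N ^ (k - m) * coeff (Pm k m) q)
      = 1 / real N ^ m * left_u k m q"
    using N by (simp add: left_u_Pm field_simps)
  finally show ?thesis .
qed

lemma VL_identity:
  assumes i: "i < k" and c: "c < k"
  shows "(\<Sum>l<k. vv k l i * left_u k l c) = (if i = c then 1 else 0)"
proof -
  let ?A = "mat k k (\<lambda>(m, c). left_u k m c)"
  let ?B = "mat k k (\<lambda>(c, j). vv k j c)"
  have A: "?A \<in> carrier_mat k k" and B: "?B \<in> carrier_mat k k" by auto
  have AB: "?A * ?B = 1\<^sub>m k"
  proof (rule eq_matI)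
    fix m j assume "m < dim_row (1\<^sub>m k)" "j < dim_col (1\<^sub>m k)"
    hence mj: "m < k" "j < k" by auto
    have "(?A * ?B) $$ (m, j) = (\<Sum>c = 0..<k. left_u k m c * vv k j c)"
      using mj by (simp add: scalar_prod_def)
    also have "\<dots> = (if m = j then 1 else 0)" using biorth[OF mj] by (simp add: atLeast0LessThan)
    finally show "(?A * ?B) $$ (m, j) = 1\<^sub>m k $$ (m, j)" using mj by simp
  qed auto
  have BA: "?B * ?A = 1\<^sub>m k" by (rule mat_mult_left_right_inverse[OF A B AB])
  have "(?B * ?A) $$ (i, c) = (\<Sum>l = 0..<k. vv k l i * left_u k l c)"
    using i c by (simp add: scalar_prod_def)
  thus ?thesis using BA i c by (simp add: atLeast0LessThan)
qed

lemma expansion: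
  fixes w :: "nat \<Rightarrow> real"
  assumes i: "i < k"
  shows "w i = (\<Sum>l<k. vv k l i * (\<Sum>c<k. left_u k l c * w c))"
proof -
  have "(\<Sum>l<k. vv k l i * (\<Sum>c<k. left_u k l c * w c)) = (\<Sum>c<k. (\<Sum>l<k. vv k l i * left_u k l c) * w c)"
    by (simp add: sum_distrib_left sum_distrib_right mult_ac) (rule sum.swap)
  also have "\<dots> = (\<Sum>c<k. (if i = c then 1 else 0) * w c)"
    by (rule sum.cong) (auto simp: VL_identity[OF i])
  also have "\<dots> = (\<Sum>c<k. if c = i then w c else 0)" by (rule sum.cong) auto
  also have "\<dots> = w i" using i by simp
  finally show ?thesis by simp
qed

lemma left_apply:
  assumes N: "N \<ge> 1" and l: "l < k"
  shows "(\<Sum>c<k. left_u k l c * (\<Sum>c'<k. holte_T N k c c' * w c'))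
       = 1 / real N ^ l * (\<Sum>c<k. left_u k l c * w c)"
proof -
  have "(\<Sum>c<k. left_u k l c * (\<Sum>c'<k. holte_T N k c c' * w c'))
      = (\<Sum>c'<k. (\<Sum>c<k. left_u k l c * holte_T N k c c') * w c')"
    by (simp add: sum_distrib_left sum_distrib_right mult_ac) (rule sum.swap)
  also have "\<dots> = (\<Sum>c'<k. (1 / real N ^ l * left_u k l c') * w c')"
    by (rule sum.cong) (auto simp: left_eigen[OF N l])
  finally show ?thesis by (simp add: sum_distrib_left mult_ac)
qed

lemma eigen_exists:
  assumes N: "N \<ge> 1" and j: "j < k"
  shows "is_right_eigvec N k (1 / real N ^ j) (vv k j)"
  unfolding is_right_eigvec_def
proof (intro allI impI)
  fix i assume i: "i < k"
  let ?w = "\<lambda>c. (\<Sum>c'<k. holte_T N k c c' * vv k j c')"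
  have "?w i = (\<Sum>l<k. vv k l i * (\<Sum>c<k. left_u k l c * ?w c))" by (rule expansion[OF i])
  also have "\<dots> = (\<Sum>l<k. vv k l i * (1 / real N ^ l * (if l = j then 1 else 0)))"
    by (rule sum.cong) (auto simp: left_apply[OF N] biorth j)
  also have "\<dots> = (\<Sum>l<k. if l = j then 1 / real N ^ j * vv k j i else 0)"
    by (rule sum.cong) auto
  also have "\<dots> = 1 / real N ^ j * vv k j i" using j by simp
  finally show "?w i = 1 / real N ^ j * vv k j i" .
qed

lemma vv0: "j < k \<Longrightarrow> vv k j 0 = 1"
  using vt0_nz by (simp add: vv_def)

lemma eigen_unique:
  assumes N: "N \<ge> 2" and j: "j < k" and w: "is_right_eigvec N k (1 / real N ^ j) w"
  shows "\<forall>i<k. w i = w 0 * vv k j i"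
proof -
  have N1: "N \<ge> 1" using N by simp
  define s where "s l = (\<Sum>c<k. left_u k l c * w c)" for l
  have s0: "s l = 0" if l: "l < k" "l \<noteq> j" for l
  proof -
    have "s l * (1 / real N ^ j) = 1 / real N ^ l * s l"
    proof -
      have "(\<Sum>c<k. left_u k l c * (\<Sum>c'<k. holte_T N k c c' * w c')) = (\<Sum>c<k. left_u k l c * (1 / real N ^ j * w c))"
        using w by (auto simp: is_right_eigvec_def intro!: sum.cong)
      thus ?thesis using left_apply[OF N1 l(1), of w] by (simp add: s_def sum_distrib_left mult_ac)
    qed
    moreover have "1 / real N ^ j \<noteq> 1 / real N ^ l"
    proof
      assume "1 / real N ^ j = 1 / real N ^ l"
      hence "real N ^ j = real N ^ l" by (simp add: field_simps)
      hence "j = l" using N by (simp add: power_inject_exp)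
      thus False using l by simp
    qed
    ultimately show ?thesis by (metis mult.commute mult_cancel_left)
  qed
  have wi: "w i = vv k j i * s j" if i: "i < k" for i
  proof -
    have "w i = (\<Sum>l<k. vv k l i * s l)" unfolding s_def by (rule expansion[OF i])
    also have "\<dots> = vv k j i * s j"
      using j by (subst sum.remove[of _ j]) (auto simp: s0 intro!: sum.neutral)
    finally show ?thesis .
  qed
  have "w 0 = s j" using wi[of 0] j vv0[OF j] by simp
  thus ?thesis using wi by simp
qed

lemma vv_sym:
  assumes i: "i < k" and j: "j < k"
  shows "vv k j (k - 1 - i) = (-1) ^ j * vv k j i"
proof -
  have "vt k j (k - 1 - i) = (-1) ^ j * vt k j i" using vt_sym[OF i] j by simp
  thus ?thesis by (simp add: vv_def)
qed

definition Qt :: "nat \<Rightarrow> nat \<Rightarrow> real poly" where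
  "Qt k j = (\<Sum>r\<le>j. Polynomial.smult (ee k j r * real ((k - 1) choose r)) ([:0, 1:] ^ r * [:1, 1:] ^ (j - r)))"

definition Qp :: "nat \<Rightarrow> nat \<Rightarrow> real poly" where
  "Qp k j = Polynomial.smult (1 / vt k j 0) (Qt k j)"

lemma poly_Qt: "poly (Qt k j) x = (\<Sum>r\<le>j. ee k j r * real ((k - 1) choose r) * (x ^ r * (1 + x) ^ (j - r)))"
  by (simp add: Qt_def poly_sum poly_power)

lemma V_identity:
  fixes x :: real
  assumes j: "j < k"
  shows "(\<Sum>i<k. real ((k - 1) choose i) * vv k j i * x ^ i) = (1 + x) ^ (k - 1 - j) * poly (Qp k j) x"
proof -
  have k: "{..<k} = {..k - 1}" using j by auto
  have "(\<Sum>i<k. real ((k - 1) choose i) * vt k j i * x ^ i)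
      = (\<Sum>i<k. real ((k - 1) choose i) * (\<Sum>r\<le>j. real (i choose r) * ee k j r) * x ^ i)"
    using j by (simp add: vt_expand)
  also have "\<dots> = (\<Sum>r\<le>j. ee k j r * (\<Sum>i<k. real ((k - 1) choose i) * real (i choose r) * x ^ i))"
    by (simp add: sum_distrib_left sum_distrib_right mult_ac) (rule sum.swap)
  also have "\<dots> = (\<Sum>r\<le>j. ee k j r * (real ((k - 1) choose r) * x ^ r * (1 + x) ^ (k - 1 - r)))"
  proof (rule sum.cong[OF refl])
    fix r assume r: "r \<in> {..j}"
    have "(\<Sum>i<k. real ((k - 1) choose i) * real (i choose r) * x ^ i)
        = real ((k - 1) choose r) * x ^ r * (1 + x) ^ (k - 1 - r)"
      unfolding k by (rule binom_sum_choose) (use r j in auto)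
    thus "ee k j r * (\<Sum>i<k. real ((k - 1) choose i) * real (i choose r) * x ^ i)
        = ee k j r * (real ((k - 1) choose r) * x ^ r * (1 + x) ^ (k - 1 - r))" by simp
  qed
  also have "\<dots> = (1 + x) ^ (k - 1 - j) * poly (Qt k j) x"
  proof -
    have P: "(1 + x) ^ (k - 1 - r) = (1 + x) ^ (k - 1 - j) * (1 + x) ^ (j - r)" if "r \<le> j" for r
    proof -
      have "k - 1 - r = (k - 1 - j) + (j - r)" using that j by simp
      thus ?thesis by (simp only: power_add)
    qed
    have "(\<Sum>r\<le>j. ee k j r * (real ((k - 1) choose r) * x ^ r * (1 + x) ^ (k - 1 - r)))
        = (\<Sum>r\<le>j. (1 + x) ^ (k - 1 - j) * (ee k j r * real ((k - 1) choose r) * (x ^ r * (1 + x) ^ (j - r))))"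
    proof (rule sum.cong[OF refl])
      fix r assume "r \<in> {..j}"
      hence "(1 + x) ^ (k - 1 - r) = (1 + x) ^ (k - 1 - j) * (1 + x) ^ (j - r)" by (intro P) simp
      thus "ee k j r * (real ((k - 1) choose r) * x ^ r * (1 + x) ^ (k - 1 - r))
          = (1 + x) ^ (k - 1 - j) * (ee k j r * real ((k - 1) choose r) * (x ^ r * (1 + x) ^ (j - r)))"
        by (simp only: mult_ac)
    qed
    thus ?thesis unfolding poly_Qt by (simp only: sum_distrib_left)
  qed
  finally have F: "(\<Sum>i<k. real ((k - 1) choose i) * vt k j i * x ^ i) = (1 + x) ^ (k - 1 - j) * poly (Qt k j) x" .
  have "(\<Sum>i<k. real ((k - 1) choose i) * vv k j i * x ^ i)
      = (1 / vt k j 0) * (\<Sum>i<k. real ((k - 1) choose i) * vt k j i * x ^ i)"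
    by (simp add: vv_def sum_distrib_left divide_inverse mult_ac)
  also have "\<dots> = (1 + x) ^ (k - 1 - j) * poly (Qp k j) x"
    by (simp only: F) (simp add: Qp_def mult_ac)
  finally show ?thesis .
qed

lemma Qp0:
  assumes j: "j < k"
  shows "poly (Qp k j) 0 = 1"
proof -
  have "poly (Qt k j) 0 = ee k j 0"
    unfolding poly_Qt by (simp add: sum.atMost_shift)
  moreover have "vt k j 0 = ee k j 0"
    using j by (simp add: vt_expand sum.atMost_shift)
  ultimately show ?thesis using vt0_nz[OF j] by (simp add: Qp_def)
qed

lemma lin_prod:
  "degree ([:0, 1:] ^ r * [:1, 1::real:] ^ s) = r + s \<and> coeff ([:0, 1:] ^ r * [:1, 1::real:] ^ s) (r + s) = 1"
proof -
  have d1: "degree ([:0, 1::real:] ^ r) = r" by (rule degree_linear_power)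
  have d2: "degree ([:1, 1::real:] ^ s) = s" by (rule degree_linear_power)
  have c1: "lead_coeff ([:0, 1::real:] ^ r) = 1" using coeff_linear_power[of 0 r] d1 by simp
  have c2: "lead_coeff ([:1, 1::real:] ^ s) = 1" using coeff_linear_power[of 1 s] d2 by simp
  have nz1: "[:0, 1::real:] ^ r \<noteq> 0" using c1 by auto
  have nz2: "[:1, 1::real:] ^ s \<noteq> 0" using c2 by auto
  have d: "degree ([:0, 1:] ^ r * [:1, 1::real:] ^ s) = r + s"
    using degree_mult_eq[OF nz1 nz2] d1 d2 by simp
  moreover have "lead_coeff ([:0, 1:] ^ r * [:1, 1::real:] ^ s) = 1"
    by (simp add: lead_coeff_mult c1 c2)
  ultimately show ?thesis by simp
qed

lemma coeff_Qp_top: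
  assumes j: "j < k"
  shows "coeff (Qp k j) j = (-1) ^ j"
proof -
  have "coeff (Qt k j) j = (\<Sum>r\<le>j. ee k j r * real ((k - 1) choose r))"
    unfolding Qt_def coeff_sum
  proof (rule sum.cong[OF refl])
    fix r assume "r \<in> {..j}"
    hence "r + (j - r) = j" by simp
    thus "coeff (Polynomial.smult (ee k j r * real ((k - 1) choose r)) ([:0, 1:] ^ r * [:1, 1:] ^ (j - r))) j
        = ee k j r * real ((k - 1) choose r)"
      using lin_prod[of r "j - r"] by simp
  qed
  also have "\<dots> = vt k j (k - 1)"
    using j by (simp add: vt_expand mult_ac)
  also have "\<dots> = vt k j (k - 1 - 0)" by simp
  also have "\<dots> = (-1) ^ j * vt k j 0" using j by (intro vt_sym) auto
  finally show ?thesis using vt0_nz[OF j] by (simp add: Qp_def)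
qed

lemma degree_Qp:
  assumes j: "j < k"
  shows "degree (Qp k j) = j"
proof (rule antisym)
  have "degree (Qt k j) \<le> j"
    unfolding Qt_def
  proof (rule degree_sum_le)
    fix r assume "r \<in> {..j}"
    hence "r + (j - r) = j" by simp
    thus "degree (Polynomial.smult (ee k j r * real ((k - 1) choose r)) ([:0, 1:] ^ r * [:1, 1:] ^ (j - r))) \<le> j"
      using lin_prod[of r "j - r"] degree_smult_le
      by (metis order.trans)
  qed simp
  thus "degree (Qp k j) \<le> j" unfolding Qp_def using degree_smult_le order.trans by blast
  show "j \<le> degree (Qp k j)" by (rule le_degree) (simp add: coeff_Qp_top[OF j])
qed

lemma V_sym:
  fixes x :: real
  assumes j: "j < k" and x: "x \<noteq> 0"
  shows "x ^ (k - 1) * (\<Sum>i<k. real ((k - 1) choose i) * vv k j i * (1 / x) ^ i)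
       = (-1) ^ j * (\<Sum>i<k. real ((k - 1) choose i) * vv k j i * x ^ i)"
proof -
  define g where "g i = real ((k - 1) choose i) * vv k j i * x ^ (k - 1 - i)" for i
  have "x ^ (k - 1) * (\<Sum>i<k. real ((k - 1) choose i) * vv k j i * (1 / x) ^ i) = (\<Sum>i<k. g i)"
    unfolding sum_distrib_left
  proof (rule sum.cong[OF refl])
    fix i assume "i \<in> {..<k}"
    hence i: "i \<le> k - 1" by auto
    have kk: "k - 1 - i + i = k - 1" using i by simp
    have "x ^ (k - 1 - i) * x ^ i = x ^ (k - 1 - i + i)" by (rule power_add[symmetric])
    hence e: "x ^ (k - 1) = x ^ (k - 1 - i) * x ^ i" by (simp only: kk)
    have "x ^ i * (1 / x) ^ i = 1" using x by (simp add: power_one_over)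
    hence "x ^ (k - 1) * (1 / x) ^ i = x ^ (k - 1 - i)" unfolding e by (simp add: mult.assoc)
    thus "x ^ (k - 1) * (real ((k - 1) choose i) * vv k j i * (1 / x) ^ i) = g i"
      by (simp add: g_def mult_ac)
  qed
  also have "(\<Sum>i<k. g i) = (\<Sum>i<k. g (k - Suc i))"
    using sum.atLeastLessThan_rev[of g 0 k] by (simp add: atLeast0LessThan)
  also have "\<dots> = (\<Sum>i<k. (-1) ^ j * (real ((k - 1) choose i) * vv k j i * x ^ i))"
  proof (rule sum.cong[OF refl])
    fix i assume "i \<in> {..<k}"
    hence i: "i < k" by simp
    have a: "k - Suc i = k - 1 - i" by simp
    have b: "k - 1 - (k - 1 - i) = i" using i by simp
    have c: "(k - 1) choose (k - 1 - i) = (k - 1) choose i"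
      using i by (subst binomial_symmetric[of i "k - 1"]) auto
    show "g (k - Suc i) = (-1) ^ j * (real ((k - 1) choose i) * vv k j i * x ^ i)"
      unfolding g_def a b c using vv_sym[OF i j] by simp
  qed
  finally show ?thesis by (simp add: sum_distrib_left)
qed

lemma palin:
  fixes x :: real
  assumes j: "j < k" and x: "x \<noteq> 0"
  shows "x ^ j * poly (Qp k j) (1 / x) = (-1) ^ j * poly (Qp k j) x"
proof -
  let ?Q = "Qp k j"
  have gen: "x ^ j * poly ?Q (1 / x) = (-1) ^ j * poly ?Q x" if x0: "x \<noteq> 0" and x1: "x \<noteq> -1" for x :: real
  proof -
    have "(1 + x) ^ (k - 1 - j) * (x ^ j * poly ?Q (1 / x))
        = x ^ (k - 1) * ((1 + 1 / x) ^ (k - 1 - j) * poly ?Q (1 / x))"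
    proof -
      have "x ^ (k - 1) = x ^ (k - 1 - j) * x ^ j" using j by (simp add: power_add[symmetric])
      moreover have "x ^ (k - 1 - j) * (1 + 1 / x) ^ (k - 1 - j) = (1 + x) ^ (k - 1 - j)"
        using x0 by (simp add: power_mult_distrib[symmetric] field_simps)
      ultimately show ?thesis by (simp add: mult_ac)
    qed
    also have "\<dots> = x ^ (k - 1) * (\<Sum>i<k. real ((k - 1) choose i) * vv k j i * (1 / x) ^ i)"
      unfolding V_identity[OF j, of "1 / x"] ..
    also have "\<dots> = (-1) ^ j * (\<Sum>i<k. real ((k - 1) choose i) * vv k j i * x ^ i)"
      by (rule V_sym[OF j x0])
    also have "\<dots> = (1 + x) ^ (k - 1 - j) * ((-1) ^ j * poly ?Q x)"
      unfolding V_identity[OF j, of x] by (simp add: mult_ac)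
    finally show ?thesis using x1
      by (metis add_eq_0_iff mult_cancel_left power_eq_0_iff add.commute)
  qed
  let ?D = "reflect_poly ?Q - Polynomial.smult ((-1) ^ j) ?Q"
  have Dz: "poly ?D y = 0" if "y \<noteq> 0" "y \<noteq> -1" for y :: real
  proof -
    have "poly (reflect_poly ?Q) y = y ^ j * poly ?Q (1 / y)"
      using poly_reflect_poly_nz[OF that(1), of ?Q] degree_Qp[OF j] by (simp add: divide_inverse)
    thus ?thesis using gen[OF that] by simp
  qed
  have "?D = 0"
  proof (rule ccontr)
    assume "?D \<noteq> 0"
    hence fin: "finite {y. poly ?D y = 0}" by (rule poly_roots_finite)
    have "UNIV - {0, -1} \<subseteq> {y::real. poly ?D y = 0}" using Dz by auto
    hence "finite (UNIV - {0, -1::real})" using fin finite_subset by blast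
    hence "finite (UNIV :: real set)" by simp
    thus False using infinite_UNIV_char_0 by blast
  qed
  hence "poly (reflect_poly ?Q) x = (-1) ^ j * poly ?Q x" by (metis diff_eq_diff_eq diff_self poly_smult poly_diff)
  moreover have "poly (reflect_poly ?Q) x = x ^ j * poly ?Q (1 / x)"
    using poly_reflect_poly_nz[OF x, of ?Q] degree_Qp[OF j] by (simp add: divide_inverse)
  ultimately show ?thesis by simp
qed

lemma vv_j0: "0 < k \<Longrightarrow> vv k 0 i = 1"
  using vt0_nz[of 0 k] by (simp add: vv_def vt_expand)

lemma vv_j1:
  assumes k: "2 \<le> k" and i: "i < k"
  shows "vv k 1 i = (real k - 1 - 2 * real i) / (real k - 1)"
proof -
  have e: "vt k 1 i' = ee k 1 0 + real i' * ee k 1 1" for i'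
    using k by (simp add: vt_expand)
  have e0: "vt k 1 0 = ee k 1 0" using e[of 0] by simp
  have nz: "ee k 1 0 \<noteq> 0" using vt0_nz[of 1 k] k e0 by simp
  have "vt k 1 (k - 1 - 0) = (-1) ^ 1 * vt k 1 0" using k by (intro vt_sym) auto
  hence "ee k 1 0 + real (k - 1) * ee k 1 1 = - ee k 1 0" using e[of "k - 1"] e0 by simp
  hence s: "(real k - 1) * ee k 1 1 = - 2 * ee k 1 0" using k by (simp add: of_nat_diff algebra_simps)
  have k1: "real k - 1 \<noteq> 0" using k by simp
  have "(ee k 1 0 + real i * ee k 1 1) * (real k - 1) = ee k 1 0 * (real k - 1) + real i * ((real k - 1) * ee k 1 1)"
    by (simp add: algebra_simps)
  also have "\<dots> = ee k 1 0 * (real k - 1) + real i * (- 2 * ee k 1 0)" by (simp only: s)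
  also have "\<dots> = (real k - 1 - 2 * real i) * ee k 1 0" by (simp add: algebra_simps)
  finally have "(ee k 1 0 + real i * ee k 1 1) / ee k 1 0 = (real k - 1 - 2 * real i) / (real k - 1)"
    using nz k1 by (simp add: frac_eq_eq)
  thus ?thesis by (simp only: vv_def e0 e[of i])
qed

lemma prodA: "(\<Prod>t\<in>{0..<i}. real i - real t) = fact i"
proof -
  have "(\<Prod>t\<in>{0..<i}. real i - real t) = (\<Prod>t\<in>{0..<i}. real i - real (i + 0 - Suc t))"
    by (rule prod.atLeastLessThan_rev)
  also have "\<dots> = (\<Prod>t\<in>{0..<i}. 1 + real t)"
    by (rule prod.cong) (auto simp: of_nat_diff)
  also have "\<dots> = pochhammer 1 i" by (simp add: pochhammer_prod)
  also have "\<dots> = fact i" by (simp add: pochhammer_fact)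
  finally show ?thesis .
qed

lemma prodB:
  assumes "i < k"
  shows "(\<Prod>t\<in>{Suc i..<k}. real i - real t) = (-1) ^ (k - Suc i) * fact (k - Suc i)"
proof -
  have "{Suc i..<k} = {0 + Suc i..<(k - Suc i) + Suc i}" using assms by simp
  hence "(\<Prod>t\<in>{Suc i..<k}. real i - real t) = (\<Prod>s\<in>{0..<k - Suc i}. real i - real (s + Suc i))"
    by (simp only: prod.shift_bounds_nat_ivl)
  also have "\<dots> = (\<Prod>s\<in>{0..<k - Suc i}. (-1) * (1 + real s))"
    by (rule prod.cong) auto
  also have "\<dots> = (\<Prod>s\<in>{0..<k - Suc i}. (-1::real)) * (\<Prod>s\<in>{0..<k - Suc i}. 1 + real s)"
    by (rule prod.distrib)
  also have "(\<Prod>s\<in>{0..<k - Suc i}. (-1::real)) = (-1) ^ (k - Suc i)" by simp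
  also have "(\<Prod>s\<in>{0..<k - Suc i}. 1 + real s) = fact (k - Suc i)"
    by (simp add: pochhammer_prod pochhammer_fact)
  finally show ?thesis .
qed

lemma vt_last:
  assumes i: "i < k"
  shows "vt k (k - 1) i = fact i * (-1) ^ (k - Suc i) * fact (k - Suc i) / fact k"
proof -
  let ?L = "\<lambda>t. [:real i - real t, 1:]"
  let ?A = "\<Prod>t\<in>{0..<i}. ?L t"
  let ?B = "\<Prod>t\<in>{Suc i..<k}. ?L t"
  have "(\<Prod>t<k. ?L t) = (\<Prod>t\<in>{0..<k}. ?L t)" by (simp add: atLeast0LessThan)
  also have "\<dots> = ?A * (\<Prod>t\<in>{i..<k}. ?L t)"
    using i by (simp add: prod.atLeastLessThan_concat)
  also have "(\<Prod>t\<in>{i..<k}. ?L t) = ?L i * ?B"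
    using i by (rule prod.atLeast_Suc_lessThan)
  also have "?L i = [:0, 1:]" by simp
  finally have P: "(\<Prod>t<k. ?L t) = pCons 0 (?A * ?B)" by simp
  have "vt k (k - 1) i = coeff (Bp k i) 1" using i by (simp add: vt_def)
  also have "\<dots> = 1 / fact k * coeff (?A * ?B) 0" by (simp add: Bp_def P)
  also have "coeff (?A * ?B) 0 = poly ?A 0 * poly ?B 0" by (simp add: poly_0_coeff_0[symmetric])
  also have "poly ?A 0 = fact i" by (simp add: poly_prod prodA)
  also have "poly ?B 0 = (-1) ^ (k - Suc i) * fact (k - Suc i)" by (simp add: poly_prod prodB[OF i])
  finally show ?thesis by simp
qed

lemma vv_last:
  assumes i: "i < k"
  shows "vv k (k - 1) i = (-1) ^ i / real ((k - 1) choose i)"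
proof -
  have k0: "0 < k" using i by simp
  have A: "vt k (k - 1) i = fact i * (-1) ^ (k - Suc i) * fact (k - Suc i) / fact k" by (rule vt_last[OF i])
  have B: "vt k (k - 1) 0 = (-1) ^ (k - 1) * fact (k - 1) / fact k" using vt_last[OF k0] by simp
  have C: "real ((k - 1) choose i) = fact (k - 1) / (fact i * fact (k - Suc i))"
    using binomial_fact[of i "k - 1", where 'a = real] i by simp
  have D: "(-1::real) ^ (k - 1) = (-1) ^ (k - Suc i) * (-1) ^ i"
  proof -
    have "k - 1 = (k - Suc i) + i" using i by simp
    thus ?thesis by (simp add: power_add)
  qed
  have E: "(-1::real) ^ i * (-1) ^ i = 1" by (simp add: power_add[symmetric] flip: mult_2)
  show ?thesis unfolding vv_def A B C D
    using E by (simp add: field_simps)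
qed

theorem mainTheorem6:
  fixes N k :: nat
  assumes "k \<ge> 2" and "N \<ge> 2"
  shows "\<forall>j<k. \<exists>v :: nat \<Rightarrow> real.
     is_right_eigvec N k (1 / real N ^ j) v \<and> v 0 = 1
   \<and> (\<forall>w. is_right_eigvec N k (1 / real N ^ j) w \<longrightarrow> (\<forall>i<k. w i = w 0 * v i))
   \<and> (\<exists>Q :: real poly. degree Q = j \<and> poly Q 0 = 1
        \<and> (\<forall>x::real. x \<noteq> 0 \<longrightarrow> x ^ j * poly Q (1 / x) = (-1) ^ j * poly Q x)
        \<and> (\<forall>x::real. (\<Sum>i<k. real ((k - 1) choose i) * v i * x ^ i)
                       = (1 + x) ^ (k - 1 - j) * poly Q x))
   \<and> (\<forall>i<k. v (k - 1 - i) = (-1) ^ j * v i)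
   \<and> (\<forall>m<k. (\<Sum>i<k. left_u k m i * v i) = (if m = j then 1 else 0))
   \<and> (j = 0 \<longrightarrow> (\<forall>i<k. v i = 1))
   \<and> (j = 1 \<longrightarrow> (\<forall>i<k. v i = (real k - 1 - 2 * real i) / (real k - 1)))
   \<and> (j = k - 1 \<longrightarrow> (\<forall>i<k. v i = (-1) ^ i / real ((k - 1) choose i)))"
proof (intro allI impI)
  fix j assume j: "j < k"
  have N1: "N \<ge> 1" using assms(2) by simp
  have k0: "0 < k" using j by simp
  show "\<exists>v :: nat \<Rightarrow> real.
     is_right_eigvec N k (1 / real N ^ j) v \<and> v 0 = 1
   \<and> (\<forall>w. is_right_eigvec N k (1 / real N ^ j) w \<longrightarrow> (\<forall>i<k. w i = w 0 * v i))
   \<and> (\<exists>Q :: real poly. degree Q = j \<and> poly Q 0 = 1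
        \<and> (\<forall>x::real. x \<noteq> 0 \<longrightarrow> x ^ j * poly Q (1 / x) = (-1) ^ j * poly Q x)
        \<and> (\<forall>x::real. (\<Sum>i<k. real ((k - 1) choose i) * v i * x ^ i)
                       = (1 + x) ^ (k - 1 - j) * poly Q x))
   \<and> (\<forall>i<k. v (k - 1 - i) = (-1) ^ j * v i)
   \<and> (\<forall>m<k. (\<Sum>i<k. left_u k m i * v i) = (if m = j then 1 else 0))
   \<and> (j = 0 \<longrightarrow> (\<forall>i<k. v i = 1))
   \<and> (j = 1 \<longrightarrow> (\<forall>i<k. v i = (real k - 1 - 2 * real i) / (real k - 1)))
   \<and> (j = k - 1 \<longrightarrow> (\<forall>i<k. v i = (-1) ^ i / real ((k - 1) choose i)))"
  proof (intro exI[of _ "vv k j"] conjI allI impI)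
    show "is_right_eigvec N k (1 / real N ^ j) (vv k j)" by (rule eigen_exists[OF N1 j])
    show "vv k j 0 = 1" by (rule vv0[OF j])
    show "\<And>w i. is_right_eigvec N k (1 / real N ^ j) w \<Longrightarrow> i < k \<Longrightarrow> w i = w 0 * vv k j i"
      using eigen_unique[OF assms(2) j] by blast
    show "\<exists>Q :: real poly. degree Q = j \<and> poly Q 0 = 1
        \<and> (\<forall>x::real. x \<noteq> 0 \<longrightarrow> x ^ j * poly Q (1 / x) = (-1) ^ j * poly Q x)
        \<and> (\<forall>x::real. (\<Sum>i<k. real ((k - 1) choose i) * vv k j i * x ^ i)
                       = (1 + x) ^ (k - 1 - j) * poly Q x)"
      using degree_Qp[OF j] Qp0[OF j] palin[OF j] V_identity[OF j] by blast
    show "\<And>i. i < k \<Longrightarrow> vv k j (k - 1 - i) = (-1) ^ j * vv k j i"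
      using vv_sym j by blast
    show "\<And>m. m < k \<Longrightarrow> (\<Sum>i<k. left_u k m i * vv k j i) = (if m = j then 1 else 0)"
      using biorth j by blast
    show "\<And>i. j = 0 \<Longrightarrow> i < k \<Longrightarrow> vv k j i = 1"
      using vv_j0[OF k0] by blast
    show "\<And>i. j = 1 \<Longrightarrow> i < k \<Longrightarrow> vv k j i = (real k - 1 - 2 * real i) / (real k - 1)"
      using vv_j1[OF assms(1)] by blast
    show "\<And>i. j = k - 1 \<Longrightarrow> i < k \<Longrightarrow> vv k j i = (-1) ^ i / real ((k - 1) choose i)"
      using vv_last by blast
  qed
qed

end
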